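(* Let $d\in\mathbb N$ and $\delta\in(0,1]$. For all Borel measurable functions $v,w\colon(0,1)^d\to\mathbb R$ and all $r\in(0,\delta)$, $$\|v\cdot w\|_{W^{r,2}((0,1)^d,\mathbb R)}\le\frac{(3d)^{d/2}}{\sqrt{\delta-r}}\,\|v\|_{W^{r,2}((0,1)^d,\mathbb R)}\,\|w\|_{C^\delta((0,1)^d,\mathbb R)},$$ where $v\cdot w$ denotes the pointwise product (with the convention $0\cdot\infty=0$ being irrelevant when both norms are finite).
   Context: For a function $w\colon(0,1)^d\to\mathbb R$ and $\delta\in(0,1]$: $\|w\|_{C((0,1)^d,\mathbb R)}:=\sup_{x\in(0,1)^d}|w(x)|$ and $\|w\|_{C^\delta((0,1)^d,\mathbb R)}:=\sup_{x}|w(x)|+\sup_{x\ne y}\frac{|w(x)-w(y)|}{\|x-y\|^\delta_{\mathbb R^d}}\in[0,\infty]$. For Borel measurable $v\colon(0,1)^d\to\mathbb R$ and $r\in(0,1)$: $\|v\|_{W^{r,2}((0,1)^d,\mathbb R)}:=\Big(\int_{(0,1)^d}|v(x)|^2dx+\int_{(0,1)^d}\int_{(0,1)^d}\frac{|v(x)-v(y)|^2}{\|x-y\|_{\mathbb R^d}^{d+2r}}dx\,dy\Big)^{1/2}\in[0,\infty]$. $\|\cdot\|_{\mathbb R^d}$ is the Euclidean norm. *)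

theory Defs
  imports "HOL-Analysis.Analysis"
begin

text \<open>The unit cube (0,1)^d, with d = CARD('n).\<close>
definition unit_cube :: "(real ^ 'n) set" where
  "unit_cube = {x. \<forall>i. 0 < x $ i \<and> x $ i < 1}"

definition ens_sqrt :: "ennreal \<Rightarrow> ennreal" where
  "ens_sqrt a = (if a = \<infinity> then \<infinity> else ennreal (sqrt (enn2real a)))"

definition sup_norm :: "(real ^ 'n \<Rightarrow> real) \<Rightarrow> ennreal" where
  "sup_norm w = (SUP x \<in> unit_cube. ennreal \<bar>w x\<bar>)"

definition hoelder_norm :: "real \<Rightarrow> (real ^ 'n \<Rightarrow> real) \<Rightarrow> ennreal" where
  "hoelder_norm \<delta> w = (SUP x \<in> unit_cube. ennreal \<bar>w x\<bar>)
     + (SUP p \<in> {(x, y). x \<in> unit_cube \<and> y \<in> unit_cube \<and> x \<noteq> y}.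
          ennreal (\<bar>w (fst p) - w (snd p)\<bar> / (norm (fst p - snd p) powr \<delta>)))"

definition sobolev_norm :: "real \<Rightarrow> (real ^ 'n \<Rightarrow> real) \<Rightarrow> ennreal" where
  "sobolev_norm r v = ens_sqrt
     ((\<integral>\<^sup>+ x. indicator unit_cube x * ennreal (\<bar>v x\<bar>\<^sup>2) \<partial>lborel)
      + (\<integral>\<^sup>+ x. \<integral>\<^sup>+ y. indicator unit_cube x * indicator unit_cube y *
            ennreal (\<bar>v x - v y\<bar>\<^sup>2 / (norm (x - y) powr (real CARD('n) + 2 * r))) \<partial>lborel \<partial>lborel))"

end

theory Submission
  imports Defs
begin

lemma ens_sqrt_sq: "(ens_sqrt a)^2 = a"
proof (cases "a = \<infinity>")
  case True then show ?thesis by (simp add: ens_sqrt_def)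
next
  case False
  then obtain t where t: "a = ennreal t" "0 \<le> t" by (cases a) auto
  then show ?thesis using False
  proof -
    have "(ennreal (sqrt t))^2 = ennreal ((sqrt t)^2)" using t by (simp add: ennreal_power)
    then show ?thesis using t False by (simp add: ens_sqrt_def)
  qed
qed

lemma ens_sqrt_le: assumes "a \<le> b^2" shows "ens_sqrt a \<le> b"
proof (cases "b = \<infinity>")
  case True then show ?thesis by simp
next
  case False
  then obtain t where t: "b = ennreal t" "0 \<le> t" by (cases b) auto
  then have "a \<le> ennreal (t^2)" using assms by (simp add: ennreal_power)
  then obtain u where u: "a = ennreal u" "0 \<le> u" "u \<le> t^2"
    by (metis le_ennreal_iff zero_le_power2)
  have "sqrt u \<le> t" using u t real_sqrt_le_iff[of u "t^2"] by simp
  then show ?thesis using u t by (simp add: ens_sqrt_def)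
qed

lemma cube_box: "(unit_cube :: (real^'n) set) = box 0 (vec 1)"
  by (auto simp: unit_cube_def mem_box_cart)

lemma cube_sets[measurable]: "(unit_cube :: (real^'n) set) \<in> sets borel"
  by (simp add: cube_box)

lemma cube_meas: "emeasure lborel (unit_cube :: (real^'n) set) = 1"
  proof -
  have "\<And>b. b \<in> (\<Union>x. {axis x 1}) \<Longrightarrow> (\<chi> i. (1::real)) \<bullet> b = (1::real)" by (auto simp: inner_axis)
  then have "prod ((\<bullet>) (\<chi> i. (1::real))) (\<Union>x. {axis x 1 :: real^'n}) = 1" by (intro prod.neutral) blast
  then show ?thesis by (simp add: cube_box emeasure_lborel_box_eq Basis_vec_def inner_axis one_vec_def)
qed

lemma joint_meas:
  fixes v :: "real^'n \<Rightarrow> real"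
  assumes [measurable]: "v \<in> borel_measurable borel"
  shows "(\<lambda>(x,y). indicator unit_cube x * indicator unit_cube y *
            ennreal (\<bar>v x - v y\<bar>\<^sup>2 / (norm (x - y) powr p))) \<in> borel_measurable (lborel \<Otimes>\<^sub>M lborel)"
  by measurable

lemma inner_meas:
  fixes v :: "real^'n \<Rightarrow> real"
  assumes [measurable]: "v \<in> borel_measurable borel"
  shows "(\<lambda>x. \<integral>\<^sup>+ y. indicator unit_cube x * indicator unit_cube y *
            ennreal (\<bar>v x - v y\<bar>\<^sup>2 / (norm (x - y) powr p)) \<partial>lborel) \<in> borel_measurable lborel"
  by measurable

lemma ln2_ge: "2/3 \<le> ln (2::real)"
proof -
  have "exp (2::real) = exp 1 ^ 2" using exp_of_nat_mult[of 2 "1::real"] by simp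
  also have "\<dots> < (272/100)^2" using e_less_272 by (intro power_strict_mono) auto
  also have "\<dots> < 8" by (simp add: power2_eq_square)
  finally have e2: "exp (2::real) < 8" .
  have "exp (2::real) = exp (2/3) ^ 3" using exp_of_nat_mult[of 3 "2/3::real"] by simp
  with e2 have "exp (2/3::real) ^ 3 < 2^3" by simp
  then have "exp (2/3::real) < 2" using power_less_imp_less_base by fastforce
  then have "ln (exp (2/3::real)) < ln 2" by (subst ln_less_cancel_iff) auto
  then show ?thesis by simp
qed

lemma const_ineq: assumes "1 \<le> m" shows "3 * 2^m * (2^m - 1) \<le> 2 * (3 * real m)^m"
proof (cases "m = 1")
  case True then show ?thesis by simp
next
  case False
  with assms have D2: "2 \<le> m" by simp
  have a: "3 * (4::real)^n \<le> 2 * 6^n" if "1 \<le> n" for n :: nat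
    using that
  proof (induction n rule: dec_induct)
    case base then show ?case by simp
  next
    case (step n) then show ?case by simp
  qed
  have "3 * 2^m * (2^m - 1) \<le> 3 * (2::real)^m * 2^m" by simp
  also have "\<dots> = 3 * 4^m" by (simp add: power_mult_distrib[symmetric])
  also have "\<dots> \<le> 2 * 6^m" using a assms by simp
  also have "\<dots> \<le> 2 * (3 * real m)^m" using D2 by (intro mult_left_mono power_mono) auto
  finally show ?thesis .
qed

lemma sum_bound:
  assumes s: "0 < s" "s < 1" and m: "1 \<le> m"
  shows "2 powr (real m - 2* s) * (2^m - 1) / (1 - 2 powr (-2* s)) \<le> (3 * real m)^m / (2* s)"
proof -
  define u where "u = (2::real) powr (2* s)"
  have u1: "u - 1 \<ge> 4* s/3"
  proof -
    have "u = exp (2* s*ln 2)" by (simp add: u_def powr_def)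
    also have "\<dots> \<ge> 1 + 2* s*ln 2" by (rule exp_ge_add_one_self)
    finally have "u - 1 \<ge> 2* s*ln 2" by simp
    moreover have "2* s*ln 2 \<ge> 2* s*(2/3)" using ln2_ge s by (intro mult_left_mono) auto
    ultimately show ?thesis by simp
  qed
  have upos: "u > 1" using u1 s by simp
  have e1: "2 powr (real m - 2* s) = 2^m / u"
    by (simp add: u_def powr_diff powr_realpow)
  have e2: "2 powr (-2* s) = 1 / u" by (simp add: u_def powr_minus divide_inverse)
  have "2 powr (real m - 2* s) * (2^m - 1) / (1 - 2 powr (-2* s)) = 2^m * (2^m - 1) / (u - 1)"
    unfolding e1 e2 using upos by (simp add: field_simps)
  also have "\<dots> \<le> 2^m * (2^m - 1) / (4* s/3)"
    using u1 s by (intro divide_left_mono mult_nonneg_nonneg) (auto simp: one_le_power)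
  also have "\<dots> = (3 * 2^m * (2^m - 1)) / 2 / (2* s)" using s by (simp add: field_simps)
  also have "\<dots> \<le> (2 * (3 * real m)^m) / 2 / (2* s)"
    using const_ineq[OF m] s by (intro divide_right_mono) auto
  finally show ?thesis by simp
qed

lemma cbox_vec_mem: "y \<in> cbox (x - vec t) (x + vec t :: real^'n) \<longleftrightarrow> (\<forall>i. \<bar>y$i - x$i\<bar> \<le> t)"
  by (auto simp: mem_box_cart abs_le_iff algebra_simps)

lemma emeasure_cbox_vec:
  assumes "0 \<le> t"
  shows "emeasure lborel (cbox (x - vec t) (x + vec t :: real^'n)) = ennreal ((2*t)^CARD('n))"
proof -
  have ne: "cbox (x - vec t) (x + vec t :: real^'n) \<noteq> {}"
    using cbox_vec_mem[of x x t] assms by auto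
  have "emeasure lborel (cbox (x - vec t) (x + vec t :: real^'n)) = ennreal (measure lborel (cbox (x - vec t) (x + vec t :: real^'n)))"
    using emeasure_lborel_cbox_finite[of "x - vec t" "x + vec t"] by (intro emeasure_eq_ennreal_measure) simp
  also have "measure lborel (cbox (x - vec t) (x + vec t :: real^'n)) = (2*t)^CARD('n)"
    using ne by (simp add: content_cbox_cart)
  finally show ?thesis .
qed

lemma term_eq:
  assumes a: "a = real m - 2 * s"
  shows "2 powr (real (Suc k) * a) * ((2 * (1/2)^k)^m - (2 * (1/2)^(Suc k))^m)
       = 2 powr a * (2^m - 1) * (2 powr (-2 * s))^k"
proof -
  have p2: "((2::real) powr e)^n = 2 powr (e * real n)" for e n
  proof -
    have "((2::real) powr e)^n = (2 powr e) powr (real n)" by (rule powr_realpow[symmetric]) simp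
    also have "\<dots> = 2 powr (e * real n)" by (rule powr_powr)
    finally show ?thesis .
  qed
  have q1: "2 * (1/2::real)^k = 2 powr (1 - real k)"
  proof -
    have "2 powr (1 - real k) = 2 powr 1 / 2 powr (real k)" by (rule powr_diff)
    also have "\<dots> = 2 / 2^k" by (simp add: powr_realpow)
    finally show ?thesis by (simp add: power_one_over)
  qed
  have q2: "2 * (1/2::real)^(Suc k) = 2 powr (- real k)"
  proof -
    have "2 powr (- real k) = 1 / 2 powr (real k)" by (simp add: powr_minus divide_inverse)
    also have "\<dots> = 1 / 2^k" by (simp add: powr_realpow)
    finally show ?thesis by (simp add: power_one_over)
  qed
  have h1: "(2 * (1/2::real)^k)^m = 2 powr ((1 - real k) * m)"
    unfolding q1 p2 ..
  have h2: "(2 * (1/2::real)^(Suc k))^m = 2 powr (- real k * m)"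
    unfolding q2 p2 ..
  have h3: "(2 powr (-2 * s))^k = (2::real) powr (-2 * s * k)"
    by (rule p2)
  have h4: "(2::real)^m = 2 powr m" by (simp add: powr_realpow)
  have e: "(2::real) powr ((1 - real k) * m) = 2 powr (- real k * m) * 2 powr m"
  proof -
    have "(1 - real k) * m = - real k * m + m" by (simp add: algebra_simps)
    then show ?thesis by (simp only: powr_add)
  qed
  have e2: "(2::real) powr (real (Suc k) * a) * 2 powr (- real k * m) = 2 powr a * 2 powr (-2 * s * k)"
  proof -
    have "real (Suc k) * a + (- real k * m) = a + (-2 * s * k)" unfolding a by (simp add: algebra_simps)
    then show ?thesis by (metis powr_add)
  qed
  have "2 powr (real (Suc k) * a) * ((2 * (1/2)^k)^m - (2 * (1/2)^(Suc k))^m)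
      = 2 powr (real (Suc k) * a) * 2 powr (- real k * m) * (2 powr m - 1)"
    unfolding h1 h2 e by (simp add: right_diff_distrib)
  then show ?thesis unfolding e2 h3 h4 by simp
qed

lemma kernel:
  fixes x :: "real^'n"
  assumes x: "x \<in> unit_cube" and s: "0 < s" "s < 1" and a: "a = real CARD('n) - 2 * s"
  shows "(\<integral>\<^sup>+ y. indicator unit_cube y * ennreal (1 / norm (x - y) powr a) \<partial>lborel)
         \<le> ennreal ((3 * real CARD('n))^CARD('n) / (2 * s))"
proof (cases "a < 0")
  case True
  have "real CARD('n) < 2" using True a s by simp
  moreover have "0 < CARD('n)" by simp
  ultimately have c1: "CARD('n) = 1" by linarith
  then obtain i :: 'n where Ui: "UNIV = {i}" using card_1_singletonE by blast
  have pw: "indicator unit_cube y * ennreal (1 / norm (x - y) powr a) \<le> indicator unit_cube y" for y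
  proof (cases "y \<in> unit_cube")
    case True
    have "norm (x - y) \<le> \<bar>x$i - y$i\<bar>" using norm_le_l1_cart[of "x - y"] unfolding Ui by simp
    also have "\<dots> \<le> 1"
    proof -
      have "0 < x$i" "x$i < 1" "0 < y$i" "y$i < 1" using x True unfolding unit_cube_def by auto
      then show ?thesis by linarith
    qed
    finally have n1: "norm (x - y) \<le> 1" .
    have "1 / norm (x - y) powr a \<le> 1"
    proof (cases "x = y")
      case True then show ?thesis by simp
    next
      case False
      then have np: "0 < norm (x - y)" by simp
      have "1 / norm (x - y) powr a = norm (x - y) powr (-a)" using np by (simp add: powr_minus divide_inverse)
      also have "\<dots> \<le> 1 powr (-a)" using n1 np \<open>a < 0\<close> by (intro powr_mono2) auto
      finally show ?thesis by simp
    qed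
    then show ?thesis using True by simp
  qed auto
  have "(\<integral>\<^sup>+ y. indicator unit_cube y * ennreal (1 / norm (x - y) powr a) \<partial>lborel)
        \<le> (\<integral>\<^sup>+ y. indicator (unit_cube :: (real^'n) set) y \<partial>lborel)" by (rule nn_integral_mono) (rule pw)
  also have "\<dots> = 1" using cube_meas by simp
  also have "\<dots> \<le> ennreal ((3 * real CARD('n))^CARD('n) / (2 * s))" using c1 s by simp
  finally show ?thesis .
next
  case False
  then have a0: "0 \<le> a" by simp
  define t where "t k = (1/2::real)^k" for k :: nat
  define B where "B k = cbox (x - vec (t k)) (x + vec (t k))" for k
  define c where "c k = (2::real) powr (real (Suc k) * a)" for k
  have tpos: "0 < t k" for k by (simp add: t_def)
  have memB: "y \<in> B k \<longleftrightarrow> (\<forall>i. \<bar>y$i - x$i\<bar> \<le> t k)" for y k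
    unfolding B_def by (rule cbox_vec_mem)
  have Bsets[measurable]: "B k \<in> sets lborel" for k by (simp add: B_def)
  have BS: "B (Suc k) \<subseteq> B k" for k
  proof
    fix y assume "y \<in> B (Suc k)"
    moreover have "t (Suc k) \<le> t k" by (simp add: t_def)
    ultimately show "y \<in> B k" unfolding memB by (meson order.trans)
  qed
  have mB: "emeasure lborel (B k) = ennreal ((2 * t k)^CARD('n))" for k
    unfolding B_def using tpos[of k] by (intro emeasure_cbox_vec) simp
  have mD: "emeasure lborel (B k - B (Suc k)) = ennreal ((2 * t k)^CARD('n) - (2 * t (Suc k))^CARD('n))" for k
  proof -
    have "emeasure lborel (B k - B (Suc k)) = emeasure lborel (B k) - emeasure lborel (B (Suc k))"
      using BS mB Bsets by (intro emeasure_Diff) auto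
    then show ?thesis using tpos[of "Suc k"] by (simp add: mB ennreal_minus)
  qed
  have pw: "indicator unit_cube y * ennreal (1 / norm (x - y) powr a)
            \<le> (\<Sum>k. ennreal (c k) * indicator (B k - B (Suc k)) y)" for y
  proof (cases "y \<in> unit_cube \<and> y \<noteq> x")
    case False then show ?thesis by auto
  next
    case True
    then have yU: "y \<in> unit_cube" and yx: "y \<noteq> x" by auto
    obtain i where i: "y$i \<noteq> x$i" using yx by (auto simp: vec_eq_iff)
    then have "0 < \<bar>y$i - x$i\<bar>" by simp
    then obtain K where K: "(1/2::real)^K < \<bar>y$i - x$i\<bar>" using real_arch_pow_inv[of "\<bar>y$i - x$i\<bar>" "1/2"] by auto
    have notK: "y \<notin> B K" unfolding memB t_def using K not_le by blast
    have B0: "y \<in> B 0" unfolding memB t_def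
    proof
      fix l
      have "0 < x$l" "x$l < 1" "0 < y$l" "y$l < 1" using x yU unfolding unit_cube_def by auto
      then show "\<bar>y$l - x$l\<bar> \<le> (1/2)^0" by simp
    qed
    have "\<exists>k. y \<in> B k \<and> y \<notin> B (Suc k)"
    proof (rule ccontr)
      assume "\<not> ?thesis"
      then have "y \<in> B k" for k by (induction k) (use B0 in auto)
      with notK show False by blast
    qed
    then obtain k where k1: "y \<in> B k" and k2: "y \<notin> B (Suc k)" by blast
    obtain j where j: "\<bar>y$j - x$j\<bar> > t (Suc k)" using k2 unfolding memB using not_le by blast
    have "\<bar>y$j - x$j\<bar> = \<bar>(x - y)$j\<bar>" by simp
    also have "\<dots> \<le> norm (x - y)" by (rule component_le_norm_cart)
    finally have tn: "t (Suc k) < norm (x - y)" using j by simp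
    have "1 / norm (x - y) powr a \<le> 1 / t (Suc k) powr a"
      using tpos[of "Suc k"] tn a0
      by (intro divide_left_mono powr_mono2 mult_pos_pos) auto
    also have "\<dots> = c k"
    proof -
      have "1 / t (Suc k) powr a = (1 / t (Suc k)) powr a" using tpos[of "Suc k"] by (simp add: powr_divide)
      also have "1 / t (Suc k) = 2 powr real (Suc k)"
        by (simp only: t_def powr_realpow power_one_over) (simp add: powr_realpow)
      finally show ?thesis by (simp add: c_def powr_powr)
    qed
    finally have le: "1 / norm (x - y) powr a \<le> c k" .
    have "indicator unit_cube y * ennreal (1 / norm (x - y) powr a) \<le> ennreal (c k) * indicator (B k - B (Suc k)) y"
      using yU k1 k2 le by (simp add: ennreal_leI)
    also have "\<dots> \<le> (\<Sum>k. ennreal (c k) * indicator (B k - B (Suc k)) y)"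
    proof -
      define f where "f = (\<lambda>j. ennreal (c j) * indicator (B j - B (Suc j)) y)"
      have "sum f {k} \<le> suminf f" by (rule sum_le_suminf) auto
      then have "f k \<le> suminf f" by simp
      then show ?thesis unfolding f_def .
    qed
    finally show ?thesis .
  qed
  define q where "q = (2::real) powr (-2 * s)"
  have q: "0 < q" "q < 1" using s by (auto simp: q_def powr_less_one)
  have tm: "c k * ((2 * t k)^CARD('n) - (2 * t (Suc k))^CARD('n)) = 2 powr a * (2^CARD('n) - 1) * q^k" for k
    unfolding c_def t_def q_def by (rule term_eq[OF a])
  have "(\<integral>\<^sup>+ y. indicator unit_cube y * ennreal (1 / norm (x - y) powr a) \<partial>lborel)
        \<le> (\<integral>\<^sup>+ y. (\<Sum>k. ennreal (c k) * indicator (B k - B (Suc k)) y) \<partial>lborel)"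
    by (intro nn_integral_mono pw)
  also have "\<dots> = (\<Sum>k. \<integral>\<^sup>+ y. ennreal (c k) * indicator (B k - B (Suc k)) y \<partial>lborel)"
    by (intro nn_integral_suminf) measurable
  also have "\<dots> = (\<Sum>k. ennreal (2 powr a * (2^CARD('n) - 1) * q^k))"
  proof (rule suminf_cong)
    fix k
    have m0: "0 \<le> (2 * t k)^CARD('n) - (2 * t (Suc k))^CARD('n)"
      using tpos[of "Suc k"] by (auto simp: t_def intro!: power_mono)
    have "(\<integral>\<^sup>+ y. ennreal (c k) * indicator (B k - B (Suc k)) y \<partial>lborel) = ennreal (c k) * emeasure lborel (B k - B (Suc k))"
      by (rule nn_integral_cmult_indicator) (use Bsets in auto)
    also have "\<dots> = ennreal (c k * ((2 * t k)^CARD('n) - (2 * t (Suc k))^CARD('n)))"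
      unfolding mD using m0 by (simp add: ennreal_mult c_def)
    finally show "(\<integral>\<^sup>+ y. ennreal (c k) * indicator (B k - B (Suc k)) y \<partial>lborel) = ennreal (2 powr a * (2^CARD('n) - 1) * q^k)"
      unfolding tm .
  qed
  also have "\<dots> = ennreal (2 powr a * (2^CARD('n) - 1) * (1 / (1 - q)))"
    using q by (intro suminf_ennreal_eq sums_mult geometric_sums) auto
  also have "\<dots> \<le> ennreal ((3 * real CARD('n))^CARD('n) / (2 * s))"
    using sum_bound[OF s, of "CARD('n)"] unfolding a q_def by (intro ennreal_leI) simp
  finally show ?thesis .
qed

lemma lin2:
  fixes f g :: "'a \<Rightarrow> ennreal"
  assumes "f \<in> borel_measurable M" "g \<in> borel_measurable M"
  shows "(\<integral>\<^sup>+x. c1 * f x + c2 * g x \<partial>M) = c1 * (\<integral>\<^sup>+x. f x \<partial>M) + c2 * (\<integral>\<^sup>+x. g x \<partial>M)"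
  using assms by (simp add: nn_integral_add nn_integral_cmult)

lemma pw_real:
  fixes vx vy wx wy n p dl :: real
  assumes n: "0 < n"
  shows "\<bar>vx * wx - vy * wy\<bar>\<^sup>2 / n powr p
     \<le> 2 * \<bar>wy\<bar>^2 * (\<bar>vx - vy\<bar>\<^sup>2 / n powr p)
       + 2 * (\<bar>wx - wy\<bar> / n powr dl)^2 * \<bar>vx\<bar>\<^sup>2 * (1 / n powr (p - 2 * dl))"
proof -
  have np: "0 < n powr p" "0 < n powr dl" using n by auto
  have "\<bar>vx * wx - vy * wy\<bar>\<^sup>2 = ((vx - vy) * wy + vx * (wx - wy))^2" by (simp add: algebra_simps)
  also have "\<dots> \<le> 2 * ((vx - vy) * wy)^2 + 2 * (vx * (wx - wy))^2"
    by (smt (verit) zero_le_power2 power2_diff power2_sum)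
  finally have ineq: "\<bar>vx * wx - vy * wy\<bar>\<^sup>2 \<le> 2 * ((vx - vy) * wy)^2 + 2 * (vx * (wx - wy))^2" .
  have e: "1 / n powr (p - 2 * dl) = (n powr dl)^2 / n powr p"
    using n by (simp add: powr_diff powr_mult_base power2_eq_square powr_add[symmetric])
  have "2 * \<bar>wy\<bar>^2 * (\<bar>vx - vy\<bar>\<^sup>2 / n powr p)
       + 2 * (\<bar>wx - wy\<bar> / n powr dl)^2 * \<bar>vx\<bar>\<^sup>2 * (1 / n powr (p - 2 * dl))
      = (2 * ((vx - vy) * wy)^2 + 2 * (vx * (wx - wy))^2) / n powr p"
    unfolding e using np by (simp add: field_simps power2_eq_square)
  then show ?thesis using ineq np by (simp add: divide_right_mono)
qed

lemma final_alg:
  fixes S Hs A Bv K A' B' Q :: ennreal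
  assumes "A' \<le> S^2 * A" "B' \<le> 2 * S^2 * Bv + 2 * Hs^2 * K * A" "Q = 2 * K" "2 \<le> Q"
  shows "A' + B' \<le> Q * (S + Hs)^2 * (A + Bv)"
proof -
  have Q1: "1 \<le> Q" using assms(4) by (metis dual_order.trans one_le_numeral)
  have "A' + B' \<le> S^2 * A + (2 * S^2 * Bv + 2 * Hs^2 * K * A)" using assms(1,2) by (rule add_mono)
  also have "\<dots> \<le> Q * S^2 * A + (Q * S^2 * Bv + Q * Hs^2 * A)"
  proof (intro add_mono)
    show "S^2 * A \<le> Q * S^2 * A" using Q1 mult_right_mono[OF Q1, of "S^2 * A"] by (simp add: mult.assoc)
    show "2 * S^2 * Bv \<le> Q * S^2 * Bv" using assms(4) by (intro mult_right_mono) auto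
    show "2 * Hs^2 * K * A \<le> Q * Hs^2 * A" unfolding assms(3) by (simp add: mult_ac)
  qed
  also have "\<dots> = Q * (S^2 * A + S^2 * Bv + Hs^2 * A)" by (simp add: algebra_simps)
  also have "\<dots> \<le> Q * ((S + Hs)^2 * (A + Bv))"
  proof (rule mult_left_mono)
    have "(S + Hs)^2 * (A + Bv) = (S^2 * A + S^2 * Bv + Hs^2 * A) + (Hs^2 * Bv + 2 * S * Hs * (A + Bv))"
      by (simp only: power2_eq_square distrib_left distrib_right mult_2 mult_2_right mult_ac add_ac)
    then show "S^2 * A + S^2 * Bv + Hs^2 * A \<le> (S + Hs)^2 * (A + Bv)" by simp
  qed simp
  finally show ?thesis by (simp add: mult.assoc)
qed

lemma pwB:
  fixes v w :: "real^'n \<Rightarrow> real" and x y :: "real^'n"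
  assumes Sx: "ennreal \<bar>w y\<bar> \<le> S"
    and Hx: "x \<noteq> y \<Longrightarrow> ennreal (\<bar>w x - w y\<bar> / norm (x - y) powr \<delta>) \<le> Hs"
    and pa: "p - 2 * \<delta> = a"
  shows "ennreal (\<bar>v x * w x - v y * w y\<bar>\<^sup>2 / norm (x - y) powr p)
     \<le> 2 * S^2 * ennreal (\<bar>v x - v y\<bar>\<^sup>2 / norm (x - y) powr p)
       + 2 * Hs^2 * ennreal (\<bar>v x\<bar>\<^sup>2) * ennreal (1 / norm (x - y) powr a)"
proof (cases "x = y")
  case True then show ?thesis by simp
next
  case False
  define n where "n = norm (x - y)"
  have n: "0 < n" using False by (simp add: n_def)
  define F where "F = \<bar>v x - v y\<bar>\<^sup>2 / n powr p"
  define G where "G = 1 / n powr a"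
  define \<beta> where "\<beta> = \<bar>w x - w y\<bar> / n powr \<delta>"
  have F0: "0 \<le> F" and G0: "0 \<le> G" and \<beta>0: "0 \<le> \<beta>" by (auto simp: F_def G_def \<beta>_def)
  have r: "\<bar>v x * w x - v y * w y\<bar>\<^sup>2 / n powr p \<le> 2 * \<bar>w y\<bar>^2 * F + 2 * \<beta>^2 * \<bar>v x\<bar>\<^sup>2 * G"
    using pw_real[OF n, of "v x" "w x" "v y" "w y" p \<delta>] unfolding F_def G_def \<beta>_def pa .
  have "ennreal (\<bar>v x * w x - v y * w y\<bar>\<^sup>2 / n powr p) \<le> ennreal (2 * \<bar>w y\<bar>^2 * F + 2 * \<beta>^2 * \<bar>v x\<bar>\<^sup>2 * G)"
    using r by (rule ennreal_leI)
  also have "\<dots> = ennreal (2 * \<bar>w y\<bar>^2 * F) + ennreal (2 * \<beta>^2 * \<bar>v x\<bar>\<^sup>2 * G)"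
    using F0 G0 by (intro ennreal_plus) auto
  also have "ennreal (2 * \<bar>w y\<bar>^2 * F) = 2 * (ennreal \<bar>w y\<bar>)^2 * ennreal F"
    using F0 by (simp add: ennreal_mult ennreal_power)
  also have "ennreal (2 * \<beta>^2 * \<bar>v x\<bar>\<^sup>2 * G) = 2 * (ennreal \<beta>)^2 * ennreal (\<bar>v x\<bar>\<^sup>2) * ennreal G"
    using G0 \<beta>0 by (simp add: ennreal_mult ennreal_power)
  also have "2 * (ennreal \<bar>w y\<bar>)^2 * ennreal F + 2 * (ennreal \<beta>)^2 * ennreal (\<bar>v x\<bar>\<^sup>2) * ennreal G
       \<le> 2 * S^2 * ennreal F + 2 * Hs^2 * ennreal (\<bar>v x\<bar>\<^sup>2) * ennreal G"
  proof (intro add_mono mult_right_mono mult_left_mono power_mono)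
    show "ennreal \<bar>w y\<bar> \<le> S" by (rule Sx)
    show "ennreal \<beta> \<le> Hs" using Hx[OF False] by (simp add: \<beta>_def n_def)
  qed auto
  finally show ?thesis by (simp add: F_def G_def n_def)
qed

lemma main_meas:
  fixes v w :: "real ^ 'n \<Rightarrow> real" and \<delta> r :: real
  assumes "0 < \<delta>" and "\<delta> \<le> 1"
    and vm[measurable]: "v \<in> borel_measurable borel"
    and wm[measurable]: "w \<in> borel_measurable borel"
    and "0 < r" and "r < \<delta>"
  shows "sobolev_norm r (\<lambda>x. v x * w x)
     \<le> ennreal ((3 * real CARD('n)) powr (real CARD('n) / 2) / sqrt (\<delta> - r))
        * sobolev_norm r v * hoelder_norm \<delta> w"
proof -
  define U where "U = (unit_cube :: (real^'n) set)"
  define p where "p = real CARD('n) + 2 * r"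
  define s where "s = \<delta> - r"
  define a where "a = real CARD('n) - 2 * s"
  have s: "0 < s" "s < 1" using assms by (auto simp: s_def)
  have pa: "p - 2 * \<delta> = a" by (simp add: p_def a_def s_def)
  define S where "S = (SUP x \<in> U. ennreal \<bar>w x\<bar>)"
  define Hs where "Hs = (SUP q \<in> {(x, y). x \<in> U \<and> y \<in> U \<and> x \<noteq> y}.
          ennreal (\<bar>w (fst q) - w (snd q)\<bar> / (norm (fst q - snd q) powr \<delta>)))"
  have hn: "hoelder_norm \<delta> w = S + Hs" by (simp add: hoelder_norm_def S_def Hs_def U_def)
  define A where "A = (\<integral>\<^sup>+ x. indicator U x * ennreal (\<bar>v x\<bar>\<^sup>2) \<partial>lborel)"
  define Bv where "Bv = (\<integral>\<^sup>+ x. \<integral>\<^sup>+ y. indicator U x * indicator U y *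
            ennreal (\<bar>v x - v y\<bar>\<^sup>2 / (norm (x - y) powr p)) \<partial>lborel \<partial>lborel)"
  define A' where "A' = (\<integral>\<^sup>+ x. indicator U x * ennreal (\<bar>v x * w x\<bar>\<^sup>2) \<partial>lborel)"
  define B' where "B' = (\<integral>\<^sup>+ x. \<integral>\<^sup>+ y. indicator U x * indicator U y *
            ennreal (\<bar>v x * w x - v y * w y\<bar>\<^sup>2 / (norm (x - y) powr p)) \<partial>lborel \<partial>lborel)"
  have sv: "sobolev_norm r v = ens_sqrt (A + Bv)" by (simp add: sobolev_norm_def A_def Bv_def U_def p_def)
  have svw: "sobolev_norm r (\<lambda>x. v x * w x) = ens_sqrt (A' + B')"
    by (simp add: sobolev_norm_def A'_def B'_def U_def p_def)
  have Um[measurable]: "U \<in> sets borel" by (simp add: U_def)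
  have Sx: "ennreal \<bar>w x\<bar> \<le> S" if "x \<in> U" for x unfolding S_def using that by (rule SUP_upper)
  have Hx: "ennreal (\<bar>w x - w y\<bar> / norm (x - y) powr \<delta>) \<le> Hs" if "x \<in> U" "y \<in> U" "x \<noteq> y" for x y
    unfolding Hs_def using that by (intro SUP_upper2[of "(x,y)"]) auto
  define K where "K = ennreal ((3 * real CARD('n))^CARD('n) / (2 * s))"
  have A'le: "A' \<le> S^2 * A"
  proof -
    have "A' \<le> (\<integral>\<^sup>+ x. S^2 * (indicator U x * ennreal (\<bar>v x\<bar>\<^sup>2)) \<partial>lborel)"
      unfolding A'_def
    proof (rule nn_integral_mono)
      fix x
      show "indicator U x * ennreal (\<bar>v x * w x\<bar>\<^sup>2) \<le> S^2 * (indicator U x * ennreal (\<bar>v x\<bar>\<^sup>2))"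
      proof (cases "x \<in> U")
        case True
        have "ennreal (\<bar>v x * w x\<bar>\<^sup>2) = (ennreal \<bar>w x\<bar>)^2 * ennreal (\<bar>v x\<bar>\<^sup>2)"
        proof -
          have e1: "\<bar>v x * w x\<bar>\<^sup>2 = \<bar>w x\<bar>^2 * \<bar>v x\<bar>\<^sup>2" by (simp add: abs_mult power_mult_distrib)
          have e2: "ennreal (\<bar>w x\<bar>^2 * \<bar>v x\<bar>\<^sup>2) = ennreal (\<bar>w x\<bar>^2) * ennreal (\<bar>v x\<bar>\<^sup>2)"
            by (rule ennreal_mult) auto
          have e3: "ennreal (\<bar>w x\<bar>^2) = (ennreal \<bar>w x\<bar>)^2" by (rule ennreal_power[symmetric]) simp
          show ?thesis unfolding e1 e2 e3 ..
        qed
        also have "\<dots> \<le> S^2 * ennreal (\<bar>v x\<bar>\<^sup>2)" using Sx[OF True] by (intro mult_right_mono power_mono) auto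
        finally show ?thesis using True by simp
      qed simp
    qed
    also have "\<dots> = S^2 * A" unfolding A_def by (rule nn_integral_cmult) measurable
    finally show ?thesis .
  qed
  have B'le: "B' \<le> 2 * S^2 * Bv + 2 * Hs^2 * K * A"
  proof -
    define \<Phi> where "\<Phi> x = (\<integral>\<^sup>+ y. indicator U x * indicator U y *
            ennreal (\<bar>v x - v y\<bar>\<^sup>2 / (norm (x - y) powr p)) \<partial>lborel)" for x
    have inner: "(\<integral>\<^sup>+ y. indicator U x * indicator U y *
            ennreal (\<bar>v x * w x - v y * w y\<bar>\<^sup>2 / (norm (x - y) powr p)) \<partial>lborel)
          \<le> 2 * S^2 * \<Phi> x + 2 * Hs^2 * K * (indicator U x * ennreal (\<bar>v x\<bar>\<^sup>2))" for x
    proof -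
      have "(\<integral>\<^sup>+ y. indicator U x * indicator U y *
            ennreal (\<bar>v x * w x - v y * w y\<bar>\<^sup>2 / (norm (x - y) powr p)) \<partial>lborel)
         \<le> (\<integral>\<^sup>+ y. (2 * S^2) * (indicator U x * indicator U y * ennreal (\<bar>v x - v y\<bar>\<^sup>2 / (norm (x - y) powr p)))
              + (2 * Hs^2 * (indicator U x * ennreal (\<bar>v x\<bar>\<^sup>2))) * (indicator U y * ennreal (1 / norm (x - y) powr a)) \<partial>lborel)"
      proof (rule nn_integral_mono)
        fix y
        show "indicator U x * indicator U y * ennreal (\<bar>v x * w x - v y * w y\<bar>\<^sup>2 / (norm (x - y) powr p))
          \<le> (2 * S^2) * (indicator U x * indicator U y * ennreal (\<bar>v x - v y\<bar>\<^sup>2 / (norm (x - y) powr p)))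
              + (2 * Hs^2 * (indicator U x * ennreal (\<bar>v x\<bar>\<^sup>2))) * (indicator U y * ennreal (1 / norm (x - y) powr a))"
        proof (cases "x \<in> U \<and> y \<in> U")
          case False then show ?thesis by auto
        next
          case True
          then have xU: "x \<in> U" and yU: "y \<in> U" by auto
          have "ennreal (\<bar>v x * w x - v y * w y\<bar>\<^sup>2 / norm (x - y) powr p)
             \<le> 2 * S^2 * ennreal (\<bar>v x - v y\<bar>\<^sup>2 / norm (x - y) powr p)
               + 2 * Hs^2 * ennreal (\<bar>v x\<bar>\<^sup>2) * ennreal (1 / norm (x - y) powr a)"
            by (rule pwB[OF Sx[OF yU] Hx[OF xU yU] pa])
          then show ?thesis using xU yU by (simp add: mult.assoc)
        qed
      qed
      also have "\<dots> = (2 * S^2) * \<Phi> x + (2 * Hs^2 * (indicator U x * ennreal (\<bar>v x\<bar>\<^sup>2))) *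
                    (\<integral>\<^sup>+ y. indicator U y * ennreal (1 / norm (x - y) powr a) \<partial>lborel)"
        unfolding \<Phi>_def by (rule lin2) measurable
      also have "\<dots> \<le> 2 * S^2 * \<Phi> x + 2 * Hs^2 * K * (indicator U x * ennreal (\<bar>v x\<bar>\<^sup>2))"
      proof (cases "x \<in> U")
        case True
        have "(\<integral>\<^sup>+ y. indicator U y * ennreal (1 / norm (x - y) powr a) \<partial>lborel) \<le> K"
          unfolding K_def U_def using True s by (intro kernel) (auto simp: U_def a_def)
        then have "(2 * Hs^2 * (indicator U x * ennreal (\<bar>v x\<bar>\<^sup>2))) *
                    (\<integral>\<^sup>+ y. indicator U y * ennreal (1 / norm (x - y) powr a) \<partial>lborel)
              \<le> (2 * Hs^2 * (indicator U x * ennreal (\<bar>v x\<bar>\<^sup>2))) * K"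
          by (rule mult_left_mono) simp
        also have "\<dots> = 2 * Hs^2 * K * (indicator U x * ennreal (\<bar>v x\<bar>\<^sup>2))" by (simp only: mult_ac)
        finally show ?thesis by (rule add_left_mono)
      qed simp
      finally show ?thesis .
    qed
    have "B' \<le> (\<integral>\<^sup>+ x. 2 * S^2 * \<Phi> x + 2 * Hs^2 * K * (indicator U x * ennreal (\<bar>v x\<bar>\<^sup>2)) \<partial>lborel)"
      unfolding B'_def by (rule nn_integral_mono) (rule inner)
    also have "\<dots> = 2 * S^2 * Bv + 2 * Hs^2 * K * A"
      unfolding Bv_def A_def \<Phi>_def by (rule lin2) measurable
    finally show ?thesis .
  qed
  define C where "C = (3 * real CARD('n)) powr (real CARD('n) / 2) / sqrt (\<delta> - r)"
  have d1: "1 \<le> real CARD('n)" by simp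
  have C0: "0 \<le> C" unfolding C_def by (intro divide_nonneg_nonneg) (use assms in auto)
  have pw2: "((3 * real CARD('n)) powr (real CARD('n) / 2))^2 = (3 * real CARD('n))^CARD('n)"
  proof -
    have "((3 * real CARD('n)) powr (real CARD('n) / 2))^2
        = (3 * real CARD('n)) powr (real CARD('n) / 2) * (3 * real CARD('n)) powr (real CARD('n) / 2)"
      by (simp add: power2_eq_square)
    also have "\<dots> = (3 * real CARD('n)) powr (real CARD('n))" by (simp add: powr_add[symmetric])
    also have "\<dots> = (3 * real CARD('n))^CARD('n)" by (simp add: powr_realpow)
    finally show ?thesis .
  qed
  have C2: "C^2 = (3 * real CARD('n))^CARD('n) / s"
    unfolding C_def s_def using s by (simp add: power_divide pw2 s_def)
  have EC2: "(ennreal C)^2 = 2 * K"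
  proof -
    have "(ennreal C)^2 = ennreal (C^2)" using C0 by (simp add: ennreal_power)
    also have "\<dots> = ennreal (2 * ((3 * real CARD('n))^CARD('n) / (2 * s)))" unfolding C2 using s by simp
    also have "\<dots> = ennreal 2 * K" unfolding K_def by (rule ennreal_mult) (use s in auto)
    also have "\<dots> = 2 * K" by simp
    finally show ?thesis .
  qed
  have EC2b: "2 \<le> (ennreal C)^2"
  proof -
    have "3 * real CARD('n) \<le> (3 * real CARD('n))^CARD('n)"
    proof -
      have "(3 * real CARD('n))^1 \<le> (3 * real CARD('n))^CARD('n)"
        by (rule power_increasing) (simp, use d1 in linarith)
      then show ?thesis by simp
    qed
    moreover have "(3 * real CARD('n))^CARD('n) \<le> (3 * real CARD('n))^CARD('n) / s"
      using s by (simp add: le_divide_eq)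
    ultimately have "2 \<le> C^2" unfolding C2 using d1 by linarith
    then have "ennreal 2 \<le> ennreal (C^2)" by (rule ennreal_leI)
    then show ?thesis using C0 by (simp add: ennreal_power)
  qed
  have "A' + B' \<le> (ennreal C)^2 * (S + Hs)^2 * (A + Bv)"
    by (rule final_alg[OF A'le B'le EC2 EC2b])
  also have "\<dots> = (ennreal C * ens_sqrt (A + Bv) * (S + Hs))^2"
    by (simp add: power_mult_distrib ens_sqrt_sq mult_ac)
  finally have "ens_sqrt (A' + B') \<le> ennreal C * ens_sqrt (A + Bv) * (S + Hs)" by (rule ens_sqrt_le)
  then show ?thesis unfolding svw sv hn C_def .
qed

lemma sob_cong:
  fixes v v' :: "real^'n \<Rightarrow> real"
  assumes "\<And>x. x \<in> unit_cube \<Longrightarrow> v x = v' x"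
  shows "sobolev_norm r v = sobolev_norm r v'"
proof -
  have e1: "indicator unit_cube x * ennreal (\<bar>v x\<bar>\<^sup>2) = indicator unit_cube x * ennreal (\<bar>v' x\<bar>\<^sup>2)" for x
    using assms by (cases "x \<in> unit_cube") auto
  have e2: "indicator unit_cube x * indicator unit_cube y * ennreal (\<bar>v x - v y\<bar>\<^sup>2 / (norm (x - y) powr p))
          = indicator unit_cube x * indicator unit_cube y * ennreal (\<bar>v' x - v' y\<bar>\<^sup>2 / (norm (x - y) powr p))" for x y p
    using assms by (cases "x \<in> unit_cube \<and> y \<in> unit_cube") auto
  show ?thesis unfolding sobolev_norm_def e1 e2 ..
qed

lemma hoel_cong:
  fixes w w' :: "real^'n \<Rightarrow> real"
  assumes "\<And>x. x \<in> unit_cube \<Longrightarrow> w x = w' x"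
  shows "hoelder_norm \<delta> w = hoelder_norm \<delta> w'"
  unfolding hoelder_norm_def
  by (intro arg_cong2[where f="(+)"] SUP_cong) (auto simp: assms)

theorem mainTheorem3:
  fixes v w :: "real ^ 'n \<Rightarrow> real" and \<delta> r :: real
  assumes "0 < \<delta>" and "\<delta> \<le> 1"
    and "v \<in> borel_measurable (restrict_space borel unit_cube)"
    and "w \<in> borel_measurable (restrict_space borel unit_cube)"
    and "0 < r" and "r < \<delta>"
  shows "sobolev_norm r (\<lambda>x. v x * w x)
     \<le> ennreal ((3 * real CARD('n)) powr (real CARD('n) / 2) / sqrt (\<delta> - r))
        * sobolev_norm r v * hoelder_norm \<delta> w"
proof -
  define v' where "v' x = indicator unit_cube x *\<^sub>R v x" for x :: "real^'n"
  define w' where "w' x = indicator unit_cube x *\<^sub>R w x" for x :: "real^'n"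
  have vm: "v' \<in> borel_measurable borel"
    using assms(3) unfolding v'_def by (subst (asm) borel_measurable_restrict_space_iff) auto
  have wm: "w' \<in> borel_measurable borel"
    using assms(4) unfolding w'_def by (subst (asm) borel_measurable_restrict_space_iff) auto
  have ev: "x \<in> unit_cube \<Longrightarrow> v x = v' x" for x by (simp add: v'_def)
  have ew: "x \<in> unit_cube \<Longrightarrow> w x = w' x" for x by (simp add: w'_def)
  have "sobolev_norm r (\<lambda>x. v x * w x) = sobolev_norm r (\<lambda>x. v' x * w' x)"
    by (rule sob_cong) (simp add: ev ew)
  also have "\<dots> \<le> ennreal ((3 * real CARD('n)) powr (real CARD('n) / 2) / sqrt (\<delta> - r))
        * sobolev_norm r v' * hoelder_norm \<delta> w'"
    by (rule main_meas[OF assms(1,2) vm wm assms(5,6)])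
  also have "sobolev_norm r v' = sobolev_norm r v" by (rule sob_cong) (simp add: ev)
  also have "hoelder_norm \<delta> w' = hoelder_norm \<delta> w" by (rule hoel_cong) (simp add: ew)
  finally show ?thesis .
qed

end
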